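(* Let $X$ be a locally compact Hausdorff, totally disconnected topological space, $G$ a discrete group, $\phi=(\phi_g,X_g,X)_{g\in G}$ a partial action of $G$ on $X$ with every $X_g$ clopen, and $K$ a field. Then the Steinberg algebra $A_K(\mathcal{G}_X)$ is $G$-graded von Neumann regular.
   Context: A partial action of $G$ (identity $\varepsilon$) on a topological space $X$ is $(\phi_g,X_g,X)_{g\in G}$ with $X_g$ open, homeomorphisms $\phi_g:X_{g^{-1}}\to X_g$, and (i) $X_\varepsilon=X$, $\phi_\varepsilon=\operatorname{id}$; (ii) $\phi_g(X_{g^{-1}}\cap X_h)=X_g\cap X_{gh}$; (iii) $\phi_g\phi_h(x)=\phi_{gh}(x)$ for $x\in X_{h^{-1}}\cap X_{h^{-1}g^{-1}}$. The groupoid $\mathcal{G}_X=\bigcup_{g}\{g\}\times X_g\subseteq G\times X$ (product topology) has range $r(g,x)=x$, domain $d(g,x)=\phi_{g^{-1}}(x)$, composition $(g,x)(h,y)=(gh,x)$ when $y=\phi_{g^{-1}}(x)$, inverse $(g^{-1},\phi_{g^{-1}}(x))$, and is $G$-graded by $(g,x)\mapsto g$. The Steinberg algebra $A_K(\mathcal{G}_X)$ consists of compactly supported locally constant functions $\mathcal{G}_X\to K$ with convolution product, graded by $A_K(\mathcal{G}_X)_g=\{f:\operatorname{supp}f\subseteq\{g\}\times X_g\}$. A graded ring is graded von Neumann regular if for each homogeneous $x$ there is $y$ with $xyx=x$. *)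

theory Defs
  imports "HOL-Analysis.Analysis"
begin

text \<open>The group G is written additively via the type class group_add
  (not necessarily commutative): identity 0, product g + h, inverse - g.\<close>

definition totally_disconnected_space :: "'a topology \<Rightarrow> bool" where
  "totally_disconnected_space T \<longleftrightarrow>
     (\<forall>S. connectedin T S \<longrightarrow> (\<exists>a. S \<subseteq> {a}))"

definition partial_action ::
  "('g::group_add \<Rightarrow> 'x::topological_space \<Rightarrow> 'x) \<Rightarrow> ('g \<Rightarrow> 'x set) \<Rightarrow> bool" where
  "partial_action phi Xg \<longleftrightarrow>
     (\<forall>g. open (Xg g)) \<and>
     (\<forall>g. homeomorphic_map (top_of_set (Xg (- g))) (top_of_set (Xg g)) (phi g)) \<and>
     Xg 0 = UNIV \<and> (\<forall>x. phi 0 x = x) \<and>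
     (\<forall>g h. phi g ` (Xg (- g) \<inter> Xg h) = Xg g \<inter> Xg (g + h)) \<and>
     (\<forall>g h. \<forall>x \<in> Xg (- h) \<inter> Xg (- h + - g). phi g (phi h x) = phi (g + h) x)"

text \<open>The groupoid of germs as a subset of G \<times> X, with its topology
  (subspace of the product of discrete G with X).\<close>
definition groupoid_set :: "('g \<Rightarrow> 'x set) \<Rightarrow> ('g \<times> 'x) set" where
  "groupoid_set Xg = {(g, x). x \<in> Xg g}"

definition groupoid_top :: "('g \<Rightarrow> 'x::topological_space set) \<Rightarrow> ('g \<times> 'x) topology" where
  "groupoid_top Xg = subtopology (prod_topology (discrete_topology UNIV) euclidean) (groupoid_set Xg)"

text \<open>Functions on the groupoid are represented as functions on G \<times> X vanishing
  outside the groupoid.  Support = closure (in the groupoid) of the non-zero set.\<close>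
definition steinberg_algebra ::
  "('g \<Rightarrow> 'x::topological_space set) \<Rightarrow> ('g \<times> 'x \<Rightarrow> 'k::field) set" where
  "steinberg_algebra Xg =
     {f. (\<forall>p. p \<notin> groupoid_set Xg \<longrightarrow> f p = 0) \<and>
         (\<forall>p \<in> groupoid_set Xg. \<exists>U. openin (groupoid_top Xg) U \<and> p \<in> U \<and> (\<forall>q\<in>U. f q = f p)) \<and>
         compactin (groupoid_top Xg) ((groupoid_top Xg) closure_of {p \<in> groupoid_set Xg. f p \<noteq> 0})}"

text \<open>Convolution: (f * h)(k, x) = sum over arrows (g, x) with range x of
  f(g, x) h((g, x)^{-1} (k, x)) = f(g, x) h(-g + k, phi (-g) x).\<close>
definition convolution ::
  "('g::group_add \<Rightarrow> 'x \<Rightarrow> 'x) \<Rightarrow> ('g \<Rightarrow> 'x set) \<Rightarrow> ('g \<times> 'x \<Rightarrow> 'k::field)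
     \<Rightarrow> ('g \<times> 'x \<Rightarrow> 'k) \<Rightarrow> ('g \<times> 'x \<Rightarrow> 'k)" where
  "convolution phi Xg f h = (\<lambda>(k, x).
     if x \<in> Xg k then (\<Sum>g \<in> {g. x \<in> Xg g \<and> f (g, x) \<noteq> 0}. f (g, x) * h (- g + k, phi (- g) x))
     else 0)"

definition steinberg_component ::
  "('g \<Rightarrow> 'x::topological_space set) \<Rightarrow> 'g \<Rightarrow> ('g \<times> 'x \<Rightarrow> 'k::field) set" where
  "steinberg_component Xg g = {f \<in> steinberg_algebra Xg. \<forall>h x. h \<noteq> g \<longrightarrow> f (h, x) = 0}"

definition graded_von_neumann_regular ::
  "'a set \<Rightarrow> ('a \<Rightarrow> 'a \<Rightarrow> 'a) \<Rightarrow> ('g \<Rightarrow> 'a set) \<Rightarrow> bool" where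
  "graded_von_neumann_regular A m Ag \<longleftrightarrow> (\<forall>g. \<forall>x \<in> Ag g. \<exists>y \<in> A. m (m x y) x = x)"

end

theory Submission
  imports Defs
begin

lemma topspace_gt: "topspace (groupoid_top Xg) = groupoid_set Xg"
  by (simp add: groupoid_top_def)

lemma nz_closed:
  assumes "\<forall>p \<in> groupoid_set Xg. \<exists>U. openin (groupoid_top Xg) U \<and> p \<in> U \<and> (\<forall>q\<in>U. f q = f p)"
  shows "groupoid_top Xg closure_of {p \<in> groupoid_set Xg. f p \<noteq> 0} = {p \<in> groupoid_set Xg. f p \<noteq> 0}"
  unfolding closure_of_eq closedin_def
proof
  show "{p \<in> groupoid_set Xg. f p \<noteq> 0} \<subseteq> topspace (groupoid_top Xg)" unfolding topspace_gt by blast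
  show "openin (groupoid_top Xg) (topspace (groupoid_top Xg) - {p \<in> groupoid_set Xg. f p \<noteq> 0})"
  proof (rule openin_subopen[THEN iffD2], rule ballI)
    fix p assume p: "p \<in> topspace (groupoid_top Xg) - {p \<in> groupoid_set Xg. f p \<noteq> 0}"
    have pg: "p \<in> groupoid_set Xg" "f p = 0" using p by (auto simp: topspace_gt)
    from bspec[OF assms pg(1)] obtain U where U: "openin (groupoid_top Xg) U" "p \<in> U" "\<forall>q\<in>U. f q = f p"
      by blast
    have "U \<subseteq> topspace (groupoid_top Xg) - {p \<in> groupoid_set Xg. f p \<noteq> 0}"
    proof
      fix q assume q: "q \<in> U"
      have "f q = 0" using bspec[OF U(3) q] pg(2) by simp
      then show "q \<in> topspace (groupoid_top Xg) - {p \<in> groupoid_set Xg. f p \<noteq> 0}"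
        using openin_subset[OF U(1)] q by blast
    qed
    then show "\<exists>T. openin (groupoid_top Xg) T \<and> p \<in> T \<and> T \<subseteq> topspace (groupoid_top Xg) - {p \<in> groupoid_set Xg. f p \<noteq> 0}"
      using U by blast
  qed
qed

lemma slice_open:
  assumes "openin (groupoid_top Xg) U" "\<And>h. open (Xg h)"
  shows "open {x. (g, x) \<in> U}"
proof -
  obtain V where V: "openin (prod_topology (discrete_topology UNIV) euclidean) V" "U = V \<inter> groupoid_set Xg"
    using assms(1) by (auto simp: groupoid_top_def openin_subtopology)
  have c: "continuous_map euclidean (prod_topology (discrete_topology UNIV) euclidean) (\<lambda>x. (g, x))"
    by (simp add: continuous_map_pairwise o_def)
  have "openin euclidean {x \<in> topspace euclidean. (g, x) \<in> V}"
    using openin_continuous_map_preimage[OF c V(1)] by simp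
  then have "open {x. (g, x) \<in> V}" by simp
  moreover have "{x. (g, x) \<in> U} = {x. (g, x) \<in> V} \<inter> Xg g"
    using V(2) by (auto simp: groupoid_set_def)
  ultimately show ?thesis using assms(2) by auto
qed

lemma box_open:
  assumes "open W" "W \<subseteq> Xg h"
  shows "openin (groupoid_top Xg) ({h} \<times> W)"
proof -
  have "openin (prod_topology (discrete_topology UNIV) euclidean) ({h} \<times> W)"
    using assms by (simp add: openin_prod_Times_iff)
  moreover have "{h} \<times> W = ({h} \<times> W) \<inter> groupoid_set Xg" using assms(2) by (auto simp: groupoid_set_def)
  ultimately show ?thesis unfolding groupoid_top_def openin_subtopology by blast
qed

theorem mainTheorem6:
  fixes phi :: "'g::group_add \<Rightarrow> 'x::t2_space \<Rightarrow> 'x"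
    and Xg :: "'g \<Rightarrow> 'x set"
  assumes "locally_compact_space (euclidean :: 'x topology)"
    and "totally_disconnected_space (euclidean :: 'x topology)"
    and "partial_action phi Xg"
    and "\<And>g. closed (Xg g)"
  shows "graded_von_neumann_regular (steinberg_algebra Xg :: ('g \<times> 'x \<Rightarrow> 'k::field) set)
           (convolution phi Xg) (steinberg_component Xg)"
proof -
  have opn: "\<And>h. open (Xg h)" and X0: "Xg 0 = UNIV" and phi0: "\<And>x. phi 0 x = x"
    and img: "\<And>g h. phi g ` (Xg (- g) \<inter> Xg h) = Xg g \<inter> Xg (g + h)"
    and cmp: "\<And>g h x. x \<in> Xg (- h) \<inter> Xg (- h + - g) \<Longrightarrow> phi g (phi h x) = phi (g + h) x"
    and hom: "\<And>g. homeomorphic_map (top_of_set (Xg (- g))) (top_of_set (Xg g)) (phi g)"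
    using assms(3) unfolding partial_action_def by blast+
  have inv1: "phi g (phi (-g) x) = x" if "x \<in> Xg g" for g x
    using cmp[of x "-g" g] that X0 phi0 by simp
  have inv2: "phi (-g) (phi g x) = x" if "x \<in> Xg (-g)" for g x
    using cmp[of x g "-g"] that X0 phi0 by simp
  have maps: "phi g x \<in> Xg g" if "x \<in> Xg (-g)" for g x
    using img[of g 0] that X0 by auto
  have cont: "continuous_on (Xg (-g)) (phi g)" for g
    using homeomorphic_imp_continuous_map[OF hom[of g]] continuous_map_subtopology_eu by blast
  show ?thesis unfolding graded_von_neumann_regular_def
  proof (intro allI ballI)
    fix g and f :: "'g \<times> 'x \<Rightarrow> 'k"
    assume fc: "f \<in> steinberg_component Xg g"
    have fA: "f \<in> steinberg_algebra Xg" and fh: "\<And>h x. h \<noteq> g \<Longrightarrow> f (h, x) = 0"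
      using fc unfolding steinberg_component_def by auto
    have fz: "\<And>p. p \<notin> groupoid_set Xg \<Longrightarrow> f p = 0"
      and flc: "\<forall>p \<in> groupoid_set Xg. \<exists>U. openin (groupoid_top Xg) U \<and> p \<in> U \<and> (\<forall>q\<in>U. f q = f p)"
      and fcp: "compactin (groupoid_top Xg) ((groupoid_top Xg) closure_of {p \<in> groupoid_set Xg. f p \<noteq> 0})"
      using fA unfolding steinberg_algebra_def by blast+
    have fX: "x \<in> Xg g" if "f (g, x) \<noteq> 0" for x
      using fz[of "(g,x)"] that by (auto simp: groupoid_set_def)
    define y :: "'g \<times> 'x \<Rightarrow> 'k" where
      "y = (\<lambda>(h, z). if h = - g \<and> z \<in> Xg (- g) \<and> f (g, phi g z) \<noteq> 0 then inverse (f (g, phi g z)) else 0)"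
    have yz: "\<And>p. p \<notin> groupoid_set Xg \<Longrightarrow> y p = 0"
      by (auto simp: y_def groupoid_set_def)
    have ylc: "\<forall>p \<in> groupoid_set Xg. \<exists>U. openin (groupoid_top Xg) U \<and> p \<in> U \<and> (\<forall>q\<in>U. y q = y p)"
    proof
      fix p assume p: "p \<in> groupoid_set Xg"
      obtain h z where hz: "p = (h, z)" by (cases p)
      have zh: "z \<in> Xg h" using p hz by (auto simp: groupoid_set_def)
      show "\<exists>U. openin (groupoid_top Xg) U \<and> p \<in> U \<and> (\<forall>q\<in>U. y q = y p)"
      proof (cases "h = - g")
        case False
        show ?thesis
          by (rule exI[of _ "{h} \<times> Xg h"]) (use box_open[OF opn[of h], of Xg h] zh hz False in \<open>auto simp: y_def\<close>)
      next
        case True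
        have gp: "(g, phi g z) \<in> groupoid_set Xg" using maps[of z g] zh True by (auto simp: groupoid_set_def)
        then obtain U where U: "openin (groupoid_top Xg) U" "(g, phi g z) \<in> U" "\<forall>q\<in>U. f q = f (g, phi g z)"
          using flc by blast
        define W where "W = Xg (-g) \<inter> phi g -` {x. (g, x) \<in> U}"
        have "open (phi g -` {x. (g, x) \<in> U} \<inter> Xg (-g))"
          using continuous_on_open_vimage[OF opn[of "-g"], of "phi g"] cont[of g] slice_open[OF U(1) opn, of g] by blast
        then have "open W" unfolding W_def by (simp add: Int_commute)
        then have oW: "openin (groupoid_top Xg) ({h} \<times> W)"
          by (rule box_open) (auto simp: W_def True)
        have "y q = y p" if q: "q \<in> {h} \<times> W" for q
        proof -
          obtain w where w: "q = (h, w)" "w \<in> Xg (-g)" "(g, phi g w) \<in> U"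
            using q by (auto simp: W_def)
          have "f (g, phi g w) = f (g, phi g z)" using bspec[OF U(3) w(3)] .
          then show ?thesis using w zh True hz by (simp add: y_def)
        qed
        moreover have "p \<in> {h} \<times> W" using U(2) zh True hz by (simp add: W_def)
        ultimately show ?thesis using oW by blast
      qed
    qed
    let ?Nf = "{p \<in> groupoid_set Xg. f p \<noteq> 0}"
    let ?Ny = "{p \<in> groupoid_set Xg. y p \<noteq> 0}"
    let ?P = "prod_topology (discrete_topology (UNIV::'g set)) (euclidean::'x topology)"
    define m where "m = (\<lambda>p::'g \<times> 'x. (- g, phi (- g) (snd p)))"
    have Nfc: "compactin ?P ?Nf"
      using fcp nz_closed[OF flc] by (simp add: groupoid_top_def compactin_subtopology)
    have mc: "continuous_map (subtopology ?P ?Nf) ?P m"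
      unfolding continuous_map_pairwise
    proof
      show "continuous_map (subtopology ?P ?Nf) (discrete_topology UNIV) (fst \<circ> m)"
        by (simp add: m_def o_def)
      have s: "continuous_map (subtopology ?P ?Nf) (top_of_set (Xg g)) snd"
        by (rule continuous_map_into_subtopology)
           (auto intro: continuous_map_from_subtopology continuous_map_snd simp: groupoid_set_def, metis fh)
      have "continuous_map (top_of_set (Xg g)) (top_of_set (Xg (- g))) (phi (- g))"
        using homeomorphic_imp_continuous_map[OF hom[of "-g"]] by simp
      then have "continuous_map (top_of_set (Xg g)) euclidean (phi (- g))"
        using continuous_map_into_fulltopology by blast
      from continuous_map_compose[OF s this]
      show "continuous_map (subtopology ?P ?Nf) euclidean (snd \<circ> m)"
        by (simp add: m_def o_def)
    qed
    have "compactin ?P (m ` ?Nf)"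
      by (rule image_compactin[OF _ mc]) (simp add: compactin_subtopology Nfc)
    moreover have "m ` ?Nf = ?Ny"
    proof
      show "m ` ?Nf \<subseteq> ?Ny"
      proof
        fix q assume "q \<in> m ` ?Nf"
        then obtain h x where hx: "(h, x) \<in> ?Nf" "q = m (h, x)" by auto
        have hg: "h = g" using hx fh by (cases "h = g") auto
        have xg: "x \<in> Xg g" using hx hg by (auto simp: groupoid_set_def)
        show "q \<in> ?Ny" using hx hg xg maps[of x "-g"] inv1[OF xg]
          by (auto simp: m_def y_def groupoid_set_def)
      qed
      show "?Ny \<subseteq> m ` ?Nf"
      proof
        fix q assume q: "q \<in> ?Ny"
        obtain h w where hw: "q = (h, w)" by (cases q)
        have h: "h = -g" "w \<in> Xg (-g)" "f (g, phi g w) \<noteq> 0"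
          using q hw by (auto simp: y_def split: if_splits)
        have "(g, phi g w) \<in> ?Nf" using h maps[of w g] by (auto simp: groupoid_set_def)
        moreover have "q = m (g, phi g w)" using hw h inv2[of w g] by (simp add: m_def)
        ultimately show "q \<in> m ` ?Nf" by blast
      qed
    qed
    ultimately have "compactin (groupoid_top Xg) ((groupoid_top Xg) closure_of ?Ny)"
      using nz_closed[OF ylc] by (auto simp: groupoid_top_def compactin_subtopology)
    then have yA: "y \<in> steinberg_algebra Xg"
      unfolding steinberg_algebra_def using yz ylc by blast
    define e where "e = convolution phi Xg f y"
    have e: "e = (\<lambda>(h, x). if h = 0 \<and> f (g, x) \<noteq> 0 then 1 else 0)"
    proof (rule ext, clarify)
      fix h x
      have S: "{g'. x \<in> Xg g' \<and> f (g', x) \<noteq> 0} = (if f (g, x) \<noteq> 0 then {g} else {})"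
        using fh fX by (auto, metis)
      show "e (h, x) = (if h = 0 \<and> f (g, x) \<noteq> 0 then 1 else 0)"
      proof (cases "f (g, x) \<noteq> 0")
        case True
        have xg: "x \<in> Xg g" using fX True .
        have cz: "(-g + h = -g) = (h = 0)" by (metis add.right_neutral add_left_cancel)
        show ?thesis
          using True xg maps[of x "-g"] inv1[OF xg] X0
          by (auto simp: e_def convolution_def S y_def cz)
      next
        case False
        then show ?thesis by (simp add: e_def convolution_def S)
      qed
    qed
    have "convolution phi Xg e f = f"
    proof (rule ext, clarify)
      fix k x
      have S: "{g'. x \<in> Xg g' \<and> e (g', x) \<noteq> 0} = (if f (g, x) \<noteq> 0 then {0} else {})"
        using X0 by (auto simp: e)
      show "convolution phi Xg e f (k, x) = f (k, x)"
      proof (cases "f (g, x) \<noteq> 0")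
        case True
        show ?thesis
          unfolding convolution_def prod.case S using True fz[of "(k,x)"] by (auto simp: e phi0 groupoid_set_def)
      next
        case False
        then show ?thesis using fh fX by (cases "k = g") (auto simp: convolution_def S)
      qed
    qed
    then show "\<exists>y\<in>steinberg_algebra Xg. convolution phi Xg (convolution phi Xg f y) f = f"
      using yA e_def by blast
  qed
qed

end
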